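(* For every $d \ge 1$, $\mu^\Diamond(d) \le d+1$; that is, there exist pairwise disjoint sets $\mathbf{S}_1,\dots,\mathbf{S}_{d+1}\subset\mathbb{R}^d$ with $|\mathbf{S}_i| = d+1$, in general position together with $0$, such that $0 \in \operatorname{conv}(\mathbf{S}_i\cup\mathbf{S}_j)$ for all $i \ne j$ and exactly $d+1$ colourful simplices contain $0$.
   Context: A colourful simplex is the closed simplex $\operatorname{conv}\{x_1,\dots,x_{d+1}\}$ with $x_i\in\mathbf{S}_i$ for each $i$; distinct choices of $(x_1,\dots,x_{d+1})$ count as distinct. $\mu^\Diamond(d)$ denotes the minimum, over all configurations of pairwise disjoint sets $\mathbf{S}_1,\dots,\mathbf{S}_{d+1}\subset\mathbb{R}^d$ with $|\mathbf{S}_i|=d+1$, in general position together with $0$, satisfying $0 \in \operatorname{conv}(\mathbf{S}_i \cup \mathbf{S}_j)$ for all $i\ne j$, of the number of colourful simplices containing $0$. *)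

theory Defs
  imports "HOL-Analysis.Analysis"
begin

definition in_general_position :: "'a::euclidean_space set \<Rightarrow> bool" where
  "in_general_position A \<longleftrightarrow>
     (\<forall>T \<subseteq> A. finite T \<and> card T \<le> DIM('a) + 1 \<longrightarrow> \<not> affine_dependent T)"

text \<open>Colour classes are indexed by 0..d where d = DIM('a) (i.e. d+1 colours).
  A colourful choice is an extensional function x with x i in S i for i = 0..d;
  distinct choices are counted separately.\<close>
definition colourful_choices :: "(nat \<Rightarrow> 'a::euclidean_space set) \<Rightarrow> (nat \<Rightarrow> 'a) set" where
  "colourful_choices S = PiE {..DIM('a)} S"

definition num_colourful_simplices_containing_0 :: "(nat \<Rightarrow> 'a::euclidean_space set) \<Rightarrow> nat" where
  "num_colourful_simplices_containing_0 S =
     card {x \<in> colourful_choices S. (0::'a) \<in> convex hull (x ` {..DIM('a)})}"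

end

theory Submission imports Defs begin


lemma neg_aff:
  fixes T :: "'a::euclidean_space set"
  assumes "finite T" "card T \<le> DIM('a)"
  shows "negligible (affine hull T)"
proof (cases "T = {}")
  case True then show ?thesis by simp
next
  case False
  then obtain a where a: "a \<in> T" by blast
  let ?X = "(\<lambda>x. -a+x) ` (T-{a})"
  have "card ?X \<le> card (T - {a})" using assms(1) by (simp add: card_image_le)
  also have "\<dots> < DIM('a)"
  proof -
    have "card (T - {a}) = card T - 1" using a by (simp add: card_Diff_singleton)
    moreover have "card T > 0" using a assms(1) by (auto simp: card_gt_0_iff)
    ultimately show ?thesis using assms(2) by linarith
  qed
  finally have c: "card ?X < DIM('a)" .
  have "dim (span ?X) \<le> card ?X"
    using dim_le_card[of "span ?X" ?X] assms(1) by simp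
  then have "negligible (span ?X)" using c by (intro negligible_lowdim) simp
  then have "negligible ((+) a ` span ?X)" by (rule negligible_translation)
  moreover have "affine hull T = (+) a ` span ?X" using affine_hull_span2[OF a] by simp
  ultimately show ?thesis by simp
qed

lemma gp_insert:
  fixes A :: "'a::euclidean_space set"
  assumes "in_general_position A"
    and "\<And>T. T \<subseteq> A \<Longrightarrow> finite T \<Longrightarrow> card T \<le> DIM('a) \<Longrightarrow> p \<notin> affine hull T"
  shows "in_general_position (insert p A)"
  unfolding in_general_position_def
proof (intro allI impI)
  fix T assume T: "T \<subseteq> insert p A" "finite T \<and> card T \<le> DIM('a) + 1"
  show "\<not> affine_dependent T"
  proof (cases "p \<in> T")
    case False
    then have "T \<subseteq> A" using T by blast
    then show ?thesis using assms(1) T unfolding in_general_position_def by blast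
  next
    case True
    let ?T = "T - {p}"
    have sub: "?T \<subseteq> A" using T by blast
    have fin: "finite ?T" using T by simp
    have cd: "card ?T \<le> DIM('a)" using T True by (auto simp: card_Diff_singleton)
    have "\<not> affine_dependent ?T" using assms(1) sub fin cd unfolding in_general_position_def by simp
    moreover have "p \<notin> affine hull ?T" using assms(2)[OF sub fin cd] .
    ultimately have "\<not> affine_dependent (insert p ?T)" by (rule affine_independent_insert)
    then show ?thesis using True by (simp add: insert_absorb)
  qed
qed

lemma greedy:
  fixes A0 :: "'a::euclidean_space set" and c :: "'i \<Rightarrow> 'a"
  assumes "finite I" "finite A0" "in_general_position A0" "r > 0"
  shows "\<exists>q. (\<forall>i\<in>I. dist (c i) (q i) < r) \<and> inj_on q I \<and> q ` I \<inter> A0 = {} \<and> in_general_position (A0 \<union> q ` I)"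
  using assms(1)
proof (induction I rule: finite_induct)
  case empty
  show ?case using assms(3) by simp
next
  case (insert i I)
  then obtain q where q: "\<forall>i\<in>I. dist (c i) (q i) < r" "inj_on q I" "q ` I \<inter> A0 = {}"
     "in_general_position (A0 \<union> q ` I)" by blast
  define A where "A = A0 \<union> q ` I"
  have finA: "finite A" using A_def assms(2) insert(1) by simp
  define B where "B = \<Union> ((\<lambda>T. affine hull T) ` {T. T \<subseteq> A \<and> card T \<le> DIM('a)})"
  have "negligible B" unfolding B_def
  proof (rule negligible_Union)
    show "finite ((\<lambda>T. affine hull T) ` {T. T \<subseteq> A \<and> card T \<le> DIM('a)})"
      by (rule finite_imageI, rule finite_subset[of _ "Pow A"]) (use finA in auto)
  next
    fix S assume "S \<in> (\<lambda>T. affine hull T) ` {T. T \<subseteq> A \<and> card T \<le> DIM('a)}"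
    then obtain T where "T \<subseteq> A" "card T \<le> DIM('a)" "S = affine hull T" by blast
    moreover have "finite T" using \<open>T \<subseteq> A\<close> finA finite_subset by blast
    ultimately show "negligible S" using neg_aff[of T] by simp
  qed
  moreover have "\<not> negligible (ball (c i) r)" using assms(4) by (intro open_not_negligible) auto
  ultimately have "\<not> ball (c i) r \<subseteq> B" using negligible_subset by blast
  then obtain p where p: "p \<in> ball (c i) r" "p \<notin> B" by blast
  have pA: "p \<notin> A"
  proof
    assume "p \<in> A"
    then have "{p} \<subseteq> A \<and> card {p} \<le> DIM('a)" by (simp add: DIM_positive Suc_leI)
    then have "p \<in> affine hull {p}" "{p} \<in> {T. T \<subseteq> A \<and> card T \<le> DIM('a)}" by auto
    then have "p \<in> B" unfolding B_def by blast
    then show False using p by simp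
  qed
  define q' where "q' = q(i := p)"
  have "q' ` I = q ` I" unfolding q'_def using insert(2) by auto
  then have img: "q' ` insert i I = insert p (q ` I)" unfolding q'_def by auto
  have g1: "in_general_position (insert p A)"
  proof (rule gp_insert)
    show "in_general_position A" using q(4) A_def by simp
    fix T assume "T \<subseteq> A" "finite T" "card T \<le> DIM('a)"
    then show "p \<notin> affine hull T" using p(2) unfolding B_def by blast
  qed
  have g2: "A0 \<union> q' ` insert i I = insert p A" using img A_def by auto
  have g3: "\<forall>j\<in>insert i I. dist (c j) (q' j) < r" using q(1) p(1) insert(2) unfolding q'_def by auto
  have g4: "inj_on q' (insert i I)"
    using q(2) pA A_def insert(2) unfolding q'_def inj_on_def by auto
  have g5: "q' ` insert i I \<inter> A0 = {}" using img q(3) pA A_def by auto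
  show ?case
  proof (intro exI[of _ q'] conjI)
    show "in_general_position (A0 \<union> q' ` insert i I)" unfolding g2 by (rule g1)
  qed (use g3 g4 g5 in \<open>simp_all\<close>)
qed



lemma ee:
  assumes "bij_betw e {1..DIM('a)} (Basis::'a::euclidean_space set)" "j \<in> {1..DIM('a)}" "j' \<in> {1..DIM('a)}"
  shows "e j \<bullet> e j' = (if j = j' then 1 else 0)"
proof -
  have "e j \<in> Basis" "e j' \<in> Basis" using assms bij_betwE by blast+
  moreover have "e j = e j' \<longleftrightarrow> j = j'" using assms bij_betw_imp_inj_on inj_on_eq_iff by metis
  ultimately show ?thesis by (simp add: inner_Basis)
qed

lemma sumB:
  assumes "bij_betw e {1..DIM('a)} (Basis::'a::euclidean_space set)"
  shows "(\<Sum>b\<in>Basis. f b) = (\<Sum>j\<in>{1..DIM('a)}. f (e j))"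
  by (rule sum.reindex_bij_betw[OF assms, symmetric])

lemma sum_neg':
  "finite A \<Longrightarrow> A \<noteq> {} \<Longrightarrow> (\<And>x. x\<in>A \<Longrightarrow> f x < (0::real)) \<Longrightarrow> sum f A < 0"
  using sum_strict_mono[of A f "\<lambda>_. 0"] by simp

lemma sum_nonpos0:
  "finite A \<Longrightarrow> (\<And>x. x\<in>A \<Longrightarrow> f x \<le> (0::real)) \<Longrightarrow> sum f A = 0 \<Longrightarrow> \<forall>x\<in>A. f x = 0"
  using sum_nonneg_eq_0_iff[of A "\<lambda>x. - f x"] by (simp add: sum_negf)

lemma count_core:
  fixes S :: "nat \<Rightarrow> 'a::euclidean_space set" and e :: "nat \<Rightarrow> 'a"
  assumes eb: "bij_betw e {1..DIM('a)} Basis"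
    and S0: "\<forall>p\<in>S 0. \<forall>b\<in>Basis. p \<bullet> b < 0"
    and Sk: "\<forall>k\<in>{1..DIM('a)}. e k \<in> S k \<and>
              (\<forall>p\<in>S k. p \<noteq> e k \<longrightarrow> p \<bullet> e k + (\<Sum>m\<in>{1..DIM('a)}-{k}. \<bar>p \<bullet> e m\<bar>) < 0)"
    and disj: "\<forall>i\<le>DIM('a). \<forall>j\<le>DIM('a). i \<noteq> j \<longrightarrow> S i \<inter> S j = {}"
    and x: "x \<in> PiE {..DIM('a)} S"
  shows "(0::'a) \<in> convex hull (x ` {..DIM('a)}) \<longleftrightarrow> (\<forall>k\<in>{1..DIM('a)}. x k = e k)"
proof
  let ?d = "DIM('a)"
  have xS: "\<And>i. i \<le> ?d \<Longrightarrow> x i \<in> S i" using x by (auto simp: PiE_iff)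
  have injx: "inj_on x {..?d}"
  proof (rule inj_onI)
    fix i j assume "i \<in> {..?d}" "j \<in> {..?d}" "x i = x j"
    then show "i = j" using xS disj by (metis IntI atMost_iff empty_iff)
  qed
  assume "0 \<in> convex hull (x ` {..?d})"
  then obtain u where u: "\<forall>y\<in>x ` {..?d}. 0 \<le> u y" "sum u (x ` {..?d}) = 1"
      "(\<Sum>y\<in>x ` {..?d}. u y *\<^sub>R y) = 0"
    by (auto simp: convex_hull_finite)
  define v where "v i = u (x i)" for i
  have v0: "\<And>i. i \<le> ?d \<Longrightarrow> 0 \<le> v i" using u(1) v_def by auto
  have v1: "(\<Sum>i\<le>?d. v i) = 1" using u(2) sum.reindex[OF injx, of u] v_def by simp
  have v2: "(\<Sum>i\<le>?d. v i *\<^sub>R x i) = 0" using u(3) sum.reindex[OF injx, of "\<lambda>y. u y *\<^sub>R y"] v_def by simp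
  show "\<forall>k\<in>{1..?d}. x k = e k"
  proof (rule ccontr)
    assume "\<not> (\<forall>k\<in>{1..?d}. x k = e k)"
    define J where "J = {k\<in>{1..?d}. x k \<noteq> e k}"
    have Jne: "J \<noteq> {}" using \<open>\<not> _\<close> J_def by auto
    have Jsub: "J \<subseteq> {1..?d}" using J_def by auto
    define phi where "phi y = (\<Sum>m\<in>J. y \<bullet> e m)" for y :: 'a
      have A: "phi (x i) < 0" if i: "i \<le> ?d" "i \<notin> {1..?d} - J" for i
      proof (cases "i = 0")
        case True
        have "\<forall>m\<in>J. x i \<bullet> e m < 0" using S0 xS[OF i(1)] True eb Jsub bij_betwE by blast
        then show ?thesis unfolding phi_def using Jne Jsub by (intro sum_neg') (auto intro: finite_subset)
      next
        case False
        then have iJ: "i \<in> J" using i by auto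
        then have ik: "i \<in> {1..?d}" "x i \<noteq> e i" using J_def by auto
        have "phi (x i) = x i \<bullet> e i + (\<Sum>m\<in>J-{i}. x i \<bullet> e m)"
          unfolding phi_def using iJ Jsub by (subst sum.remove[of J i]) (auto intro: finite_subset)
        also have "(\<Sum>m\<in>J-{i}. x i \<bullet> e m) \<le> (\<Sum>m\<in>J-{i}. \<bar>x i \<bullet> e m\<bar>)" by (intro sum_mono) auto
        also have "\<dots> \<le> (\<Sum>m\<in>{1..?d}-{i}. \<bar>x i \<bullet> e m\<bar>)" using Jsub by (intro sum_mono2) auto
        finally have "phi (x i) \<le> x i \<bullet> e i + (\<Sum>m\<in>{1..?d}-{i}. \<bar>x i \<bullet> e m\<bar>)" by simp
        also have "\<dots> < 0" using Sk ik xS[OF i(1)] by blast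
        finally show ?thesis .
      qed
    have phi_le: "\<And>i. i \<le> ?d \<Longrightarrow> phi (x i) \<le> 0"
    proof -
      fix i assume i: "i \<le> ?d"
      show "phi (x i) \<le> 0"
      proof (cases "i \<in> {1..?d} - J")
        case True
        then have "x i = e i" using J_def by auto
        moreover have "e i \<bullet> e m = 0" if "m \<in> J" for m using ee[OF eb, of i m] True that Jsub by auto
        ultimately show ?thesis unfolding phi_def by simp
      next
        case False then show ?thesis using A i by fastforce
      qed
    qed
    have phi_lt: "\<And>i. i \<le> ?d \<Longrightarrow> i \<notin> {1..?d} - J \<Longrightarrow> phi (x i) < 0" using A by blast
    have "phi 0 = 0" unfolding phi_def by simp
    moreover have "phi (\<Sum>i\<le>?d. v i *\<^sub>R x i) = (\<Sum>i\<le>?d. v i * phi (x i))"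
      unfolding phi_def by (simp add: inner_sum_left sum_distrib_left) (rule sum.swap)
    ultimately have sum0: "(\<Sum>i\<le>?d. v i * phi (x i)) = 0" using v2 by simp
    have each: "\<forall>i\<in>{..?d}. v i * phi (x i) = 0"
      using sum_nonpos0[of "{..?d}" "\<lambda>i. v i * phi (x i)"] sum0 v0 phi_le
      by (simp add: mult_nonneg_nonpos)
    have vz1: "v i = 0" if "i \<le> ?d" "i \<notin> {1..?d} - J" for i
      using each phi_lt[OF that] that by auto
    have vz2: "v j = 0" if j: "j \<in> {1..?d} - J" for j
    proof -
      have "0 = (\<Sum>i\<le>?d. v i *\<^sub>R x i) \<bullet> e j" using v2 by simp
      also have "\<dots> = (\<Sum>i\<le>?d. v i * (x i \<bullet> e j))" by (simp add: inner_sum_left)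
      also have "\<dots> = (\<Sum>i\<le>?d. if i = j then v i else 0)"
      proof (intro sum.cong refl)
        fix i assume i: "i \<in> {..?d}"
        show "v i * (x i \<bullet> e j) = (if i = j then v i else 0)"
        proof (cases "i \<in> {1..?d} - J")
          case True
          then have "x i = e i" using J_def by auto
          then show ?thesis using ee[OF eb, of i j] True j by auto
        next
          case False then show ?thesis using vz1 i j by auto
        qed
      qed
      also have "\<dots> = v j" using j by simp
      finally show ?thesis by simp
    qed
    have "(\<Sum>i\<le>?d. v i) = 0" using vz1 vz2 by (intro sum.neutral) auto
    then show False using v1 by simp
  qed
next
  let ?d = "DIM('a)"
  assume all: "\<forall>k\<in>{1..?d}. x k = e k"
  have img: "x ` {..?d} = insert (x 0) Basis"
  proof -
    have "{..?d} = insert 0 {1..?d}" by auto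
    then have "x ` {..?d} = insert (x 0) (x ` {1..?d})" by simp
    also have "x ` {1..?d} = e ` {1..?d}" using all by (intro image_cong) auto
    also have "\<dots> = Basis" using eb bij_betw_imp_surj_on by blast
    finally show ?thesis .
  qed
  define p where "p = x 0"
  have pS: "p \<in> S 0" using x p_def by (auto simp: PiE_iff)
  have pneg: "\<forall>b\<in>Basis. p \<bullet> b < 0" using S0 pS by blast
  have pB: "p \<notin> Basis"
  proof
    assume "p \<in> Basis"
    then have "p \<bullet> p < 0" using pneg by blast
    then show False using inner_ge_zero[of p] by linarith
  qed
  define s where "s = (\<Sum>b\<in>Basis. p \<bullet> b)"
  have s: "s < 0" unfolding s_def using pneg by (intro sum_neg') auto
  define a where "a = 1 / (1 - s)"
  have a: "a > 0" using s a_def by simp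
  define u where "u y = (if y = p then a else - a * (p \<bullet> y))" for y
  have "0 \<in> convex hull (insert p Basis)"
    unfolding convex_hull_finite[OF finite_insert[THEN iffD2, OF finite_Basis]]
  proof (intro CollectI exI[of _ u] conjI)
    show "\<forall>y\<in>insert p Basis. 0 \<le> u y" using a pneg unfolding u_def
      by (auto simp: mult_nonneg_nonpos less_imp_le)
    have "sum u (insert p Basis) = a + (\<Sum>b\<in>Basis. - a * (p \<bullet> b))"
      using pB unfolding u_def by (simp add: sum.insert) (intro sum.cong refl, use pB in auto)
    also have "\<dots> = a * (1 - s)" unfolding s_def by (simp add: sum_distrib_left[symmetric] algebra_simps sum_negf)
    also have "\<dots> = 1" using s a_def by simp
    finally show "sum u (insert p Basis) = 1" .
    have "(\<Sum>y\<in>insert p Basis. u y *\<^sub>R y) = a *\<^sub>R p + (\<Sum>b\<in>Basis. (- a * (p \<bullet> b)) *\<^sub>R b)"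
      using pB unfolding u_def by (simp add: sum.insert) (intro sum.cong refl, use pB in auto)
    also have "(\<Sum>b\<in>Basis. (- a * (p \<bullet> b)) *\<^sub>R b) = - a *\<^sub>R (\<Sum>b\<in>Basis. (p \<bullet> b) *\<^sub>R b)"
      by (simp add: scaleR_sum_right)
    also have "\<dots> = - a *\<^sub>R p" by (simp add: euclidean_representation)
    finally show "(\<Sum>y\<in>insert p Basis. u y *\<^sub>R y) = 0" by simp
  qed
  then show "0 \<in> convex hull (x ` {..?d})" using img p_def by simp
qed



lemma absb: "\<bar>x - y\<bar> < (r::real) \<Longrightarrow> \<bar>x\<bar> \<le> \<bar>y\<bar> + r" by arith

theorem mainTheorem4:
  "\<exists>S :: nat \<Rightarrow> 'a::euclidean_space set.
     (\<forall>i\<le>DIM('a). finite (S i) \<and> card (S i) = DIM('a) + 1) \<and>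
     (\<forall>i\<le>DIM('a). \<forall>j\<le>DIM('a). i \<noteq> j \<longrightarrow> S i \<inter> S j = {}) \<and>
     (0::'a) \<notin> (\<Union>i\<le>DIM('a). S i) \<and>
     in_general_position (insert 0 (\<Union>i\<le>DIM('a). S i)) \<and>
     (\<forall>i\<le>DIM('a). \<forall>j\<le>DIM('a). i \<noteq> j \<longrightarrow> (0::'a) \<in> convex hull (S i \<union> S j)) \<and>
     num_colourful_simplices_containing_0 S = DIM('a) + 1"
proof -
  let ?d = "DIM('a)"
  obtain e :: "nat \<Rightarrow> 'a" where eb: "bij_betw e {1..?d} Basis"
    using finite_same_card_bij[of "{1..?d}" "Basis::'a set"] by auto
  have eB: "\<And>j. j \<in> {1..?d} \<Longrightarrow> e j \<in> Basis" using eb bij_betwE by blast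
  have einj: "inj_on e {1..?d}" using eb bij_betw_imp_inj_on by blast
  have eimg: "e ` {1..?d} = Basis" using eb bij_betw_imp_surj_on by blast
  define one :: 'a where "one = (\<Sum>b\<in>Basis. b)"
  have oneb: "\<And>b. b \<in> Basis \<Longrightarrow> one \<bullet> b = 1"
  proof -
    fix b :: 'a assume b: "(b::'a) \<in> Basis"
    have "one \<bullet> b = (\<Sum>b'\<in>Basis. b' \<bullet> b)" unfolding one_def by (simp add: inner_sum_left)
    also have "\<dots> = (\<Sum>b'\<in>Basis. if b' = b then 1 else 0)" using b by (intro sum.cong refl) (simp add: inner_Basis)
    also have "\<dots> = 1" using b by simp
    finally show "one \<bullet> b = 1" .
  qed
  define lam :: real where "lam = real ?d + 1"
  define c :: "nat \<times> nat \<Rightarrow> 'a" where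
    "c i = (if fst i = 0 then - one else if snd i = fst i then - one - lam *\<^sub>R e (fst i)
            else e (snd i) - 2 *\<^sub>R e (fst i))" for i
  define r :: real where "r = 1 / (4 * real ?d * real ?d)"
  have dpos: "real ?d \<ge> 1" using DIM_positive[where 'a='a] by linarith
  have rpos: "r > 0" unfolding r_def using dpos by simp
  have dr: "real ?d * r \<le> 1/4" unfolding r_def using dpos by (simp add: field_simps)
  have ddr: "real ?d * (real ?d * r) = 1/4" unfolding r_def using dpos by (simp add: field_simps)
  have dd1: "real ?d * real ?d \<ge> 1" using dpos mult_mono[of 1 "real ?d" 1 "real ?d"] by simp
  have r14: "r \<le> 1/4" unfolding r_def using dd1 by (simp add: field_simps)
  define I where "I = ({0} \<times> {..?d}) \<union> ({1..?d} \<times> {1..?d})"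
  have finI: "finite I" unfolding I_def by simp
  have gp0: "in_general_position (insert 0 (Basis::'a set))"
  proof -
    have "\<not> affine_dependent (insert 0 (Basis::'a set))"
      using affine_dependent_iff_dependent[of 0 "Basis::'a set"] independent_Basis by simp
    then show ?thesis unfolding in_general_position_def using affine_dependent_subset by blast
  qed
  obtain q where q: "\<forall>i\<in>I. dist (c i) (q i) < r" "inj_on q I" "q ` I \<inter> insert 0 Basis = {}"
      "in_general_position (insert 0 Basis \<union> q ` I)"
    using greedy[OF finI _ gp0 rpos, of c] by auto
  have cb: "\<bar>q i \<bullet> b - c i \<bullet> b\<bar> < r" if "i \<in> I" "(b::'a) \<in> Basis" for i b
  proof -
    have "\<bar>q i \<bullet> b - c i \<bullet> b\<bar> = \<bar>(q i - c i) \<bullet> b\<bar>" by (simp add: inner_diff_left)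
    also have "\<dots> \<le> norm (q i - c i)" using Basis_le_norm[OF that(2)] by simp
    also have "\<dots> < r" using q(1) that(1) by (simp add: dist_norm norm_minus_commute)
    finally show ?thesis .
  qed
  have eej: "\<And>j j'. j \<in> {1..?d} \<Longrightarrow> j' \<in> {1..?d} \<Longrightarrow> e j \<bullet> e j' = (if j = j' then 1 else 0)"
    using ee[OF eb] by blast
  define S where "S k = (if k = 0 then q ` ({0} \<times> {..?d}) else insert (e k) (q ` ({k} \<times> {1..?d})))" for k
  have F0: "\<forall>p\<in>S 0. \<forall>b\<in>(Basis::'a set). p \<bullet> b < 0"
  proof (intro ballI)
    fix p b assume p: "p \<in> S 0" and b: "(b::'a) \<in> Basis"
    then obtain m where m: "m \<le> ?d" "p = q (0, m)" unfolding S_def by auto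
    have "(0,m) \<in> I" using m unfolding I_def by auto
    then have "\<bar>p \<bullet> b - c (0,m) \<bullet> b\<bar> < r" using cb b m by simp
    moreover have "c (0,m) \<bullet> b = -1" unfolding c_def using oneb b by simp
    ultimately show "p \<bullet> b < 0" using r14 by arith
  qed
  have Fk: "\<forall>k\<in>{1..?d}. e k \<in> S k \<and>
              (\<forall>p\<in>S k. p \<noteq> e k \<longrightarrow> p \<bullet> e k + (\<Sum>m\<in>{1..?d}-{k}. \<bar>p \<bullet> e m\<bar>) < 0)"
  proof (intro ballI conjI impI)
    fix k assume k: "k \<in> {1..?d}"
    show "e k \<in> S k" unfolding S_def using k by simp
    fix p assume p: "p \<in> S k" "p \<noteq> e k"
    then obtain m where m: "m \<in> {1..?d}" "p = q (k, m)" unfolding S_def using k by auto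
    have mI: "(k,m) \<in> I" using m k unfolding I_def by auto
    have bnd: "\<bar>p \<bullet> e j - c (k,m) \<bullet> e j\<bar> < r" if "j \<in> {1..?d}" for j
      using cb[OF mI eB[OF that]] m by simp
    have fin: "finite ({1..?d}-{k})" by simp
    have cardk: "card ({1..?d}-{k}) = ?d - 1" using k by simp
    have s1: "(\<Sum>j\<in>{1..?d}-{k}. \<bar>p \<bullet> e j\<bar>) \<le> (\<Sum>j\<in>{1..?d}-{k}. \<bar>c (k,m) \<bullet> e j\<bar> + r)"
      using bnd by (intro sum_mono) (use absb in auto)
    have s2: "(\<Sum>j\<in>{1..?d}-{k}. \<bar>c (k,m) \<bullet> e j\<bar> + r) = (\<Sum>j\<in>{1..?d}-{k}. \<bar>c (k,m) \<bullet> e j\<bar>) + (real ?d - 1) * r"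
      using cardk dpos by (simp add: sum.distrib of_nat_diff)
    have pk: "p \<bullet> e k < c (k,m) \<bullet> e k + r" using bnd[OF k] by arith
    have dm: "(real ?d - 1) * r = real ?d * r - r" by (simp add: algebra_simps)
    show "p \<bullet> e k + (\<Sum>m\<in>{1..?d}-{k}. \<bar>p \<bullet> e m\<bar>) < 0"
    proof (cases "m = k")
      case True
      have ck: "c (k,m) \<bullet> e k = -1 - lam" unfolding c_def using True k oneb[OF eB[OF k]] eej[OF k k]
        by (simp add: inner_diff_left)
      have cj: "\<bar>c (k,m) \<bullet> e j\<bar> = 1" if "j \<in> {1..?d}-{k}" for j
        unfolding c_def using True k that oneb[OF eB, of j] eej[OF k, of j] by (auto simp: inner_diff_left)
      have "(\<Sum>j\<in>{1..?d}-{k}. \<bar>c (k,m) \<bullet> e j\<bar>) = real ?d - 1"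
        using cj cardk dpos by (simp add: of_nat_diff)
      then show ?thesis using s1 s2 pk ck dr dm unfolding lam_def by linarith
    next
      case False
      have ck: "c (k,m) \<bullet> e k = -2" unfolding c_def using False k m eej[OF k k] eej[OF m(1) k]
        by (simp add: inner_diff_left)
      have cj: "\<bar>c (k,m) \<bullet> e j\<bar> = (if j = m then 1 else 0)" if "j \<in> {1..?d}-{k}" for j
        unfolding c_def using False k m that eej[OF k, of j] eej[OF m(1), of j] by (auto simp: inner_diff_left)
      have "(\<Sum>j\<in>{1..?d}-{k}. \<bar>c (k,m) \<bullet> e j\<bar>) = (\<Sum>j\<in>{1..?d}-{k}. if j = m then 1 else 0)"
        using cj by (intro sum.cong refl) auto
      also have "\<dots> = 1" using m False by simp
      finally show ?thesis using s1 s2 pk ck dr dm dpos rpos by linarith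
    qed
  qed
  have Fc: "0 \<in> convex hull (S k)" if k: "k \<in> {1..?d}" for k
  proof (rule ccontr)
    assume n: "0 \<notin> convex hull (S k)"
    have finS: "finite (S k)" unfolding S_def by simp
    have "closed (convex hull (S k))"
      using finS by (simp add: compact_imp_closed finite_imp_compact compact_convex_hull)
    then obtain w bb where w: "w \<noteq> 0" "0 < bb" "\<forall>x\<in>convex hull (S k). inner w x > bb"
      using separating_hyperplane_closed_0[of "convex hull (S k)"] n convex_convex_hull by blast
    have pos: "w \<bullet> x > 0" if "x \<in> S k" for x
      using w that hull_subset[of "S k" convex] by force
    define W where "W = norm w"
    have Wpos: "W > 0" using w W_def by simp
    have Wr: "W * r > 0" using Wpos rpos by simp
    have pert: "w \<bullet> q i < w \<bullet> c i + W * r" if "i \<in> I" for i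
    proof -
      have "w \<bullet> q i = w \<bullet> c i + w \<bullet> (q i - c i)" by (simp add: inner_diff_right)
      moreover have "w \<bullet> (q i - c i) \<le> W * norm (q i - c i)"
        unfolding W_def by (metis Cauchy_Schwarz_ineq2 abs_le_D1)
      moreover have "norm (q i - c i) < r" using q(1) that by (simp add: dist_norm norm_minus_commute)
      ultimately show ?thesis using Wpos by (smt (verit) mult_strict_left_mono)
    qed
    have kk: "(k,k) \<in> I" using k unfolding I_def by auto
    have wk: "w \<bullet> e k > 0" using pos[of "e k"] unfolding S_def using k by simp
    have low: "w \<bullet> e j > - (W * r)" if j: "j \<in> {1..?d}" for j
    proof (cases "j = k")
      case True then show ?thesis using wk Wr by simp
    next
      case False
      have jI: "(k,j) \<in> I" using k j unfolding I_def by auto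
      have "0 < w \<bullet> q (k,j)" using pos[of "q (k,j)"] unfolding S_def using k j by auto
      also have "\<dots> < w \<bullet> c (k,j) + W * r" using pert[OF jI] .
      also have "w \<bullet> c (k,j) = w \<bullet> e j - 2 * (w \<bullet> e k)" unfolding c_def using False k
        by (simp add: inner_diff_right)
      finally show ?thesis using wk by linarith
    qed
    have wone: "w \<bullet> one = (\<Sum>j\<in>{1..?d}. w \<bullet> e j)"
      unfolding one_def by (simp add: inner_sum_right sumB[OF eb])
    have sumlt: "(\<Sum>j\<in>{1..?d}. w \<bullet> e j) < W * r"
    proof -
      have "0 < w \<bullet> q (k,k)" using pos[of "q (k,k)"] unfolding S_def using k by auto
      also have "\<dots> < w \<bullet> c (k,k) + W * r" using pert[OF kk] .
      also have "w \<bullet> c (k,k) = - (w \<bullet> one) - lam * (w \<bullet> e k)" unfolding c_def using k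
        by (simp add: inner_diff_right)
      finally show ?thesis using wk wone unfolding lam_def using dpos
        by (smt (verit) mult_pos_pos)
    qed
    have up: "w \<bullet> e j < real ?d * (W * r)" if j: "j \<in> {1..?d}" for j
    proof -
      have "(\<Sum>j'\<in>{1..?d}. w \<bullet> e j') = w \<bullet> e j + (\<Sum>j'\<in>{1..?d}-{j}. w \<bullet> e j')"
        using j by (simp add: sum.remove)
      moreover have "(\<Sum>j'\<in>{1..?d}-{j}. w \<bullet> e j') \<ge> (\<Sum>j'\<in>{1..?d}-{j}. - (W * r))"
        using low by (intro sum_mono) (simp add: less_imp_le)
      moreover have "(\<Sum>j'\<in>{1..?d}-{j}. - (W * r)) = - ((real ?d - 1) * (W * r))"
        using j dpos by (simp add: of_nat_diff)
      ultimately show ?thesis using sumlt by (simp add: algebra_simps)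
    qed
    have absb2: "\<bar>w \<bullet> e j\<bar> < real ?d * (W * r)" if j: "j \<in> {1..?d}" for j
    proof -
      have "- (W * r) \<ge> - (real ?d * (W * r))" using dpos Wr by (simp add: mult_le_cancel_right1)
      then show ?thesis using low[OF j] up[OF j] by arith
    qed
    have "W \<le> (\<Sum>b\<in>Basis. \<bar>w \<bullet> b\<bar>)" unfolding W_def by (rule norm_le_l1)
    also have "\<dots> = (\<Sum>j\<in>{1..?d}. \<bar>w \<bullet> e j\<bar>)" by (rule sumB[OF eb])
    also have "\<dots> < (\<Sum>j\<in>{1..?d}. real ?d * (W * r))"
      using absb2 DIM_positive[where 'a='a] by (intro sum_strict_mono) auto
    also have "\<dots> = W * (real ?d * (real ?d * r))" by simp
    also have "\<dots> = W / 4" using ddr by simp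
    finally show False using Wpos by simp
  qed
  have qI: "q i \<notin> Basis" "q i \<noteq> 0" if "i \<in> I" for i using q(3) that by auto
  have memS: "y \<in> S k \<longleftrightarrow> (k = 0 \<and> (\<exists>m\<le>?d. y = q (0,m))) \<or>
       (k \<noteq> 0 \<and> (y = e k \<or> (\<exists>m\<in>{1..?d}. y = q (k,m))))" for y k
    unfolding S_def by auto
  have qeq: "q (i,m) = q (j,m') \<Longrightarrow> (i,m) \<in> I \<Longrightarrow> (j,m') \<in> I \<Longrightarrow> i = j" for i j m m'
    using q(2) by (simp add: inj_on_eq_iff)
  have disj: "\<forall>i\<le>?d. \<forall>j\<le>?d. i \<noteq> j \<longrightarrow> S i \<inter> S j = {}"
  proof (intro allI impI)
    fix i j assume ij: "i \<le> ?d" "j \<le> ?d" "i \<noteq> j"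
    show "S i \<inter> S j = {}"
    proof (rule ccontr)
      assume "S i \<inter> S j \<noteq> {}"
      then obtain y where y: "y \<in> S i" "y \<in> S j" by blast
      have A: "\<And>m. m \<le> ?d \<Longrightarrow> q (0,m) \<notin> Basis" using qI unfolding I_def by auto
      have B: "\<And>k m. 0 < k \<Longrightarrow> k \<le> ?d \<Longrightarrow> 0 < m \<Longrightarrow> m \<le> ?d \<Longrightarrow> q (k,m) \<notin> Basis"
        using qI unfolding I_def by auto
      have C: "\<And>k m k' m'. q (k,m) = q (k',m') \<Longrightarrow> (k = 0 \<and> m \<le> ?d \<or> 0 < k \<and> k \<le> ?d \<and> 0 < m \<and> m \<le> ?d)
          \<Longrightarrow> (k' = 0 \<and> m' \<le> ?d \<or> 0 < k' \<and> k' \<le> ?d \<and> 0 < m' \<and> m' \<le> ?d) \<Longrightarrow> k = k'"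
        using qeq unfolding I_def by auto
      have E: "\<And>k. 0 < k \<Longrightarrow> k \<le> ?d \<Longrightarrow> e k \<in> Basis" using eB by auto
      have F: "\<And>k k'. 0 < k \<Longrightarrow> k \<le> ?d \<Longrightarrow> 0 < k' \<Longrightarrow> k' \<le> ?d \<Longrightarrow> e k = e k' \<Longrightarrow> k = k'"
        using einj by (auto simp: inj_on_eq_iff)
      show False
        using y[unfolded memS] ij
        apply (elim disjE conjE exE bexE)
        apply (simp_all)
        subgoal for m using A[of m] E[of j] by auto
        subgoal for m ma using C[of j ma 0 m] by auto
        subgoal for m using A[of m] E[of i] by auto
        subgoal for m ma using C[of i ma 0 m] by auto
        subgoal using F[of i j] by auto
        subgoal for m using B[of j m] E[of i] by auto
        subgoal for m using B[of i m] E[of j] by auto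
        subgoal for m ma using C[of j ma i m] by auto
        done
    qed
  qed
  have G1: "\<forall>i\<le>?d. finite (S i) \<and> card (S i) = ?d + 1"
  proof (intro allI impI conjI)
    fix i assume i: "i \<le> ?d"
    show "finite (S i)" unfolding S_def by simp
    show "card (S i) = ?d + 1"
    proof (cases "i = 0")
      case True
      have "inj_on q ({0} \<times> {..?d})" using q(2) by (rule inj_on_subset) (auto simp: I_def)
      then show ?thesis unfolding S_def using True by (simp add: card_image card_cartesian_product)
    next
      case False
      have sub: "{i} \<times> {1..?d} \<subseteq> I" using False i unfolding I_def by auto
      have inj: "inj_on q ({i} \<times> {1..?d})" using q(2) sub by (rule inj_on_subset)
      have "e i \<notin> q ` ({i} \<times> {1..?d})" using qI sub eB[of i] False i by auto
      then show ?thesis unfolding S_def using False inj by (simp add: card_image card_cartesian_product)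
    qed
  qed
  have inS: "y \<in> Basis \<or> y \<in> q ` I" if "i \<le> ?d" "y \<in> S i" for i y
  proof -
    from that(2)[unfolded memS] consider
      (a) m where "i = 0" "m \<le> ?d" "y = q (0,m)" | (b) "i \<noteq> 0" "y = e i" |
      (c) m where "i \<noteq> 0" "m \<in> {1..?d}" "y = q (i,m)" by blast
    then show ?thesis
    proof cases
      case a then have "(0,m) \<in> I" unfolding I_def by simp
      then show ?thesis using a by blast
    next
      case b then show ?thesis using eB[of i] that(1) by simp
    next
      case c then have "(i,m) \<in> I" unfolding I_def using that(1) by simp
      then show ?thesis using c by blast
    qed
  qed
  have G3: "(0::'a) \<notin> (\<Union>i\<le>?d. S i)"
  proof
    assume "(0::'a) \<in> (\<Union>i\<le>?d. S i)"
    then obtain i where "i \<le> ?d" "(0::'a) \<in> S i" by blast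
    then have "(0::'a) \<in> Basis \<or> (0::'a) \<in> q ` I" using inS by blast
    then show False using qI nonzero_Basis by force
  qed
  have U: "insert 0 (\<Union>i\<le>?d. S i) = insert 0 Basis \<union> q ` I"
  proof
    show "insert 0 (\<Union>i\<le>?d. S i) \<subseteq> insert 0 Basis \<union> q ` I"
      using inS by blast
    show "insert 0 Basis \<union> q ` I \<subseteq> insert 0 (\<Union>i\<le>?d. S i)"
    proof
      fix y assume "y \<in> insert 0 Basis \<union> q ` I"
      then consider "y = 0" | "y \<in> Basis" | "y \<in> q ` I" by blast
      then show "y \<in> insert 0 (\<Union>i\<le>?d. S i)"
      proof cases
        case 2
        then obtain k where k: "k \<in> {1..?d}" "y = e k" using eimg by blast
        then have "y \<in> S k \<and> k \<le> ?d" unfolding S_def by auto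
        then show ?thesis by blast
      next
        case 3
        then obtain km where km: "km \<in> I" "y = q km" by blast
        obtain k m where kmp: "km = (k,m)" by fastforce
        have "k = 0 \<and> m \<le> ?d \<or> k \<in> {1..?d} \<and> m \<in> {1..?d}" using km(1) kmp unfolding I_def by auto
        then have "y \<in> S k \<and> k \<le> ?d" unfolding S_def using km(2) kmp by auto
        then show ?thesis by blast
      qed simp
    qed
  qed
  have G5: "\<forall>i\<le>?d. \<forall>j\<le>?d. i \<noteq> j \<longrightarrow> (0::'a) \<in> convex hull (S i \<union> S j)"
  proof (intro allI impI)
    fix i j assume ij: "i \<le> ?d" "j \<le> ?d" "i \<noteq> j"
    show "(0::'a) \<in> convex hull (S i \<union> S j)"
    proof (cases "i = 0")
      case True
      then have "j \<in> {1..?d}" using ij by auto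
      then have "0 \<in> convex hull (S j)" by (rule Fc)
      moreover have "convex hull (S j) \<subseteq> convex hull (S i \<union> S j)" by (rule hull_mono) simp
      ultimately show ?thesis by (rule subsetD[rotated])
    next
      case False
      then have "i \<in> {1..?d}" using ij by auto
      then have "0 \<in> convex hull (S i)" by (rule Fc)
      moreover have "convex hull (S i) \<subseteq> convex hull (S i \<union> S j)" by (rule hull_mono) simp
      ultimately show ?thesis by (rule subsetD[rotated])
    qed
  qed
  have eS: "\<And>i. i \<in> {1..?d} \<Longrightarrow> e i \<in> S i" unfolding S_def by simp
  define g where "g p = restrict (\<lambda>i. if i = 0 then p else e i) {..?d}" for p
  have G6: "num_colourful_simplices_containing_0 S = ?d + 1"
  proof -
    have "{x \<in> colourful_choices S. (0::'a) \<in> convex hull (x ` {..?d})} =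
          {x \<in> PiE {..?d} S. \<forall>k\<in>{1..?d}. x k = e k}"
      unfolding colourful_choices_def
    proof (rule Collect_cong)
      fix x
      show "(x \<in> PiE {..?d} S \<and> (0::'a) \<in> convex hull (x ` {..?d})) \<longleftrightarrow>
            (x \<in> PiE {..?d} S \<and> (\<forall>k\<in>{1..?d}. x k = e k))"
        using count_core[OF eb F0 Fk disj, of x] by (cases "x \<in> PiE {..?d} S") simp_all
    qed
    also have "\<dots> = g ` S 0"
    proof
      show "{x \<in> PiE {..?d} S. \<forall>k\<in>{1..?d}. x k = e k} \<subseteq> g ` S 0"
      proof
        fix x assume x: "x \<in> {x \<in> PiE {..?d} S. \<forall>k\<in>{1..?d}. x k = e k}"
        then have xP: "x \<in> PiE {..?d} S" and xe: "\<forall>k\<in>{1..?d}. x k = e k" by simp_all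
        have "x i = g (x 0) i" for i
        proof (cases "i \<le> ?d")
          case True
          then show ?thesis unfolding g_def using xe by (cases "i = 0") auto
        next
          case False
          then have "x i = undefined" using xP by (simp add: PiE_def extensional_def)
          then show ?thesis unfolding g_def using False by simp
        qed
        then have "x = g (x 0)" by (rule ext)
        moreover have "x 0 \<in> S 0" using xP by (simp add: PiE_iff)
        ultimately show "x \<in> g ` S 0" by (rule image_eqI)
      qed
      show "g ` S 0 \<subseteq> {x \<in> PiE {..?d} S. \<forall>k\<in>{1..?d}. x k = e k}"
      proof
        fix y assume "y \<in> g ` S 0"
        then obtain p where p: "p \<in> S 0" "y = g p" by blast
        have "y \<in> PiE {..?d} S" unfolding p(2) g_def PiE_iff
          using p(1) eS by auto
        moreover have "\<forall>k\<in>{1..?d}. y k = e k" unfolding p(2) g_def by simp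
        ultimately show "y \<in> {x \<in> PiE {..?d} S. \<forall>k\<in>{1..?d}. x k = e k}" by simp
      qed
    qed
    also have "card (g ` S 0) = card (S 0)"
    proof (rule card_image, rule inj_onI)
      fix p p' assume "g p = g p'"
      then have "g p 0 = g p' 0" by simp
      then show "p = p'" unfolding g_def by simp
    qed
    also have "\<dots> = ?d + 1" using G1 by simp
    finally show ?thesis unfolding num_colourful_simplices_containing_0_def by simp
  qed
  show ?thesis
    apply (intro exI[of _ S] conjI)
    subgoal by (rule G1)
    subgoal by (rule disj)
    subgoal by (rule G3)
    subgoal unfolding U by (rule q(4))
    subgoal by (rule G5)
    subgoal by (rule G6)
    done
qed

end
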